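(* Let $G,\Omega$ be domains in $\mathbb{C}$, let $K\subset K'$ be compact subsets of $G$, and let $\phi:G\to\Omega$ be holomorphic and injective on a neighbourhood of $K'$. If $K$ is $G$-convex and $\phi(K')$ is $\Omega$-convex, then $\phi(K)$ is $\Omega$-convex.
   Context: A hole of a set $E\subset\mathbb{C}$ is a non-empty bounded connected component of $\mathbb{C}\setminus E$. For an open set $\Omega$, a compact set $K\subset\Omega$ is $\Omega$-convex if every hole of $K$ contains a point of $\mathbb{C}\setminus\Omega$. *)

theory Defs
  imports "HOL-Complex_Analysis.Complex_Analysis"
begin

text \<open>A hole of a set E is a non-empty bounded connected component of the complement.
  (Elements of components are non-empty and connected by definition.)\<close>
definition hole :: "complex set \<Rightarrow> complex set \<Rightarrow> bool" where
  "hole E H \<longleftrightarrow> H \<in> components (- E) \<and> bounded H"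

definition omega_convex :: "complex set \<Rightarrow> complex set \<Rightarrow> bool" where
  "omega_convex \<Omega> K \<longleftrightarrow> compact K \<and> K \<subseteq> \<Omega> \<and> (\<forall>H. hole K H \<longrightarrow> H \<inter> (- \<Omega>) \<noteq> {})"

end

theory Submission
  imports Defs
begin

theorem mainTheorem3:
  fixes G \<Omega> K K' :: "complex set" and \<phi> :: "complex \<Rightarrow> complex"
  assumes "open G" "connected G" "G \<noteq> {}"
    and "open \<Omega>" "connected \<Omega>" "\<Omega> \<noteq> {}"
    and "compact K" "compact K'" "K \<subseteq> K'" "K' \<subseteq> G"
    and "\<phi> ` G \<subseteq> \<Omega>"
    and "\<exists>U. open U \<and> K' \<subseteq> U \<and> U \<subseteq> G \<and> \<phi> holomorphic_on U \<and> inj_on \<phi> U"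
    and "omega_convex G K"
    and "omega_convex \<Omega> (\<phi> ` K')"
  shows "omega_convex \<Omega> (\<phi> ` K)"
proof -
  obtain U where U: "open U" "K' \<subseteq> U" "U \<subseteq> G" "\<phi> holomorphic_on U" "inj_on \<phi> U"
    using assms(12) by blast
  have contU: "continuous_on U \<phi>"
    using U(4) holomorphic_on_imp_continuous_on by blast
  obtain g where hom: "homeomorphism U (\<phi> ` U) \<phi> g"
    using invariance_of_domain_homeomorphism[OF U(1) contU _ U(5)] by auto
  have cK: "compact (\<phi> ` K)"
    by (rule compact_continuous_image[OF continuous_on_subset[OF contU] assms(7)]) (use U(2) assms(9) in blast)
  have sK: "\<phi> ` K \<subseteq> \<Omega>" using assms(9,10,11) by blast
  have holes: "H \<inter> - \<Omega> \<noteq> {}" if hole: "hole (\<phi> ` K) H" for H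
  proof
    assume HO: "H \<inter> - \<Omega> = {}"
    have Hc: "H \<in> components (- \<phi> ` K)" and Hb: "bounded H" using hole unfolding hole_def by auto
    have oH: "open H"
      using open_components[OF _ Hc] cK compact_imp_closed by blast
    have Hne: "H \<noteq> {}" using in_components_nonempty[OF Hc] .
    have Hsub: "H \<subseteq> - \<phi> ` K" using in_components_subset[OF Hc] .
    have HK': "H \<subseteq> \<phi> ` K'"
    proof
      fix y assume yH: "y \<in> H"
      show "y \<in> \<phi> ` K'"
      proof (rule ccontr)
        assume yn: "y \<notin> \<phi> ` K'"
        define C' where "C' = connected_component_set (- \<phi> ` K') y"
        have C'c: "C' \<in> components (- \<phi> ` K')"
          unfolding C'_def unfolding components_iff using yn by blast
        have "C' \<subseteq> - \<phi> ` K" using in_components_subset[OF C'c] assms(9) by blast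
        moreover have "connected C'" using C'c in_components_connected by blast
        moreover have "H \<inter> C' \<noteq> {}" using yH yn unfolding C'_def by auto
        ultimately have "C' \<subseteq> H" using components_maximal[OF Hc] by blast
        then have "bounded C'" using Hb bounded_subset by blast
        then have "hole (\<phi> ` K') C'" using C'c unfolding hole_def by blast
        then have "C' \<inter> - \<Omega> \<noteq> {}" using assms(14) unfolding omega_convex_def by blast
        then show False using \<open>C' \<subseteq> H\<close> HO by blast
      qed
    qed
    define D where "D = U \<inter> \<phi> -` H"
    have oD: "open D" unfolding D_def using continuous_open_preimage[OF contU U(1) oH] .
    have Dg: "D = g ` H"
    proof
      show "D \<subseteq> g ` H"
        using hom unfolding D_def homeomorphism_def by (auto intro!: image_eqI)
      show "g ` H \<subseteq> D"
      proof
        fix x assume "x \<in> g ` H"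
        then obtain y where y: "y \<in> H" "x = g y" by blast
        then have "y \<in> \<phi> ` U" using HK' U(2) by blast
        then show "x \<in> D" using hom y unfolding D_def homeomorphism_def by auto
      qed
    qed
    have HU: "H \<subseteq> \<phi> ` U" using HK' U(2) by blast
    have cD: "connected D"
    proof -
      have "continuous_on (\<phi> ` U) g" using hom by (simp add: homeomorphism_def)
      then show ?thesis unfolding Dg
        by (rule connected_continuous_image[OF continuous_on_subset[OF _ HU] in_components_connected[OF Hc]])
    qed
    have DK': "D \<subseteq> K'"
    proof
      fix x assume x: "x \<in> D"
      then obtain k where k: "k \<in> K'" "\<phi> x = \<phi> k" using HK' unfolding D_def by blast
      then show "x \<in> K'" using U(2,5) x unfolding D_def inj_on_def by auto
    qed
    have DnK: "D \<subseteq> - K" using Hsub unfolding D_def by auto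
    have Dne: "D \<noteq> {}" using Hne Dg by auto
    obtain C where C: "C \<in> components (- K)" "D \<subseteq> C"
    proof -
      have "- K \<noteq> {}" using Dne DnK by blast
      from exists_component_superset[OF DnK this cD] show ?thesis using that by blast
    qed
    have cC: "connected C" using C(1) in_components_connected by blast
    have clD: "closure D \<subseteq> K'"
      using DK' closure_minimal compact_imp_closed assms(8) by blast
    have frH: "frontier H \<subseteq> \<phi> ` K"
    proof -
      have "frontier H \<subseteq> frontier (- \<phi> ` K)" using frontier_of_components_subset[OF Hc] .
      also have "\<dots> = frontier (\<phi> ` K)" by (simp add: frontier_complement)
      also have "\<dots> \<subseteq> \<phi> ` K" using cK compact_imp_closed frontier_subset_closed by blast
      finally show ?thesis .
    qed
    have img: "\<phi> ` closure D \<subseteq> closure H"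
    proof (rule image_closure_subset)
      show "continuous_on (closure D) \<phi>" using continuous_on_subset contU clD U(2) by blast
      show "\<phi> ` D \<subseteq> closure H" unfolding D_def using closure_subset by auto
    qed auto
    have cover: "C \<subseteq> D \<union> - closure D"
    proof
      fix p assume pC: "p \<in> C"
      show "p \<in> D \<union> - closure D"
      proof (cases "p \<in> closure D")
        case True
        then have pU: "p \<in> U" using clD U(2) by blast
        have pK: "p \<notin> K" using pC in_components_subset[OF C(1)] by blast
        have "\<phi> p \<notin> \<phi> ` K"
        proof
          assume "\<phi> p \<in> \<phi> ` K"
          then obtain k where "k \<in> K" "\<phi> p = \<phi> k" by blast
          then show False using pU pK U(2,5) assms(9) unfolding inj_on_def by blast
        qed
        moreover have "\<phi> p \<in> closure H" using img True by blast
        ultimately have "\<phi> p \<in> H" using frH closure_Un_frontier by blast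
        then show ?thesis using pU unfolding D_def by auto
      qed auto
    qed
    have "D \<inter> C = {} \<or> (- closure D) \<inter> C = {}"
    proof -
      have "open (- closure D)" by blast
      moreover have "D \<inter> - closure D \<inter> C = {}" using closure_subset by blast
      ultimately show ?thesis using connectedD[OF cC oD _ _ cover] by blast
    qed
    then have "C \<subseteq> closure D" using C(2) Dne by blast
    then have CK': "C \<subseteq> K'" using clD by blast
    then have "bounded C" using assms(8) compact_imp_bounded bounded_subset by blast
    then have "hole K C" using C(1) unfolding hole_def by blast
    then have "C \<inter> - G \<noteq> {}" using assms(13) unfolding omega_convex_def by blast
    then show False using CK' assms(10) by blast
  qed
  show ?thesis unfolding omega_convex_def using cK sK holes by blast
qed

end
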